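(* (1) Let $t,y_2,y_3,y_4,\dots$ be independent indeterminates and set $y_0=t$, $y_1=1$, and $y_{-i}=-y_i$ for all $i\ge1$ (so $y_{-1}=-1$). For integers $a\le b$ write $Q(a,b)=P(\tilde T_a\cup\dots\cup\tilde T_b)/(y_ay_{a+1}\cdots y_b)$. Then: (a) for every $j\ge0$, $\lim_{t\to0}Q(-j,j+1)=y_{j+2}$ (i.e. the graph $H_j=\tilde T_{-j}\cup\dots\cup\tilde T_{j+1}$, with an even number of tiles centered at $\tilde T_0\cup\tilde T_1$, corresponds to $y_{j+2}$); (b) for every $k\ge0$, $\lim_{t\to0}Q(1-k,1+k)=1$ (any graph with an odd number of tiles centered at $\tilde T_1$ corresponds to $1$). (2) Analogously, fix an integer $N$, let $s$ and $y_k$ ($k\le N-1$) be independent indeterminates, and set $y_N=1$, $y_{N+1}=s$, $y_{N+1+k}=-y_{N+1-k}$ for all $k\ge1$. Then for every $k\ge0$, $\lim_{s\to0}P(\tilde T_{N-k}\cup\dots\cup\tilde T_{N+k})/(y_{N-k}\cdots y_{N+k})=1$ (any graph with an odd number of tiles centered at $\tilde T_N$ corresponds to $1$).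
   Context: For $k\in\mathbb{Z}$, the tile $\tilde T_k$ is a square whose northern edge has weight $y_{k+1}$, southern edge weight $y_{k-1}$, and eastern and western edges weight $1$. For $a\le b$, $\tilde T_a\cup\dots\cup\tilde T_b$ denotes the ladder graph of the tiles $\tilde T_a,\dots,\tilde T_b$ in this order: vertices $u_0,\dots,u_m,v_0,\dots,v_m$ with $m=b-a+1$, edges $u_{k-1}u_k$ of weight $y_{a+k}$ (north edge of $\tilde T_{a+k-1}$), $v_{k-1}v_k$ of weight $y_{a+k-2}$ (south edge of $\tilde T_{a+k-1}$), for $1\le k\le m$, and $u_kv_k$ of weight $1$ for $0\le k\le m$. $P(G)=\sum_M\prod_{e\in M}w_e$ over perfect matchings $M$ of $G$. The limits are taken after substituting the given specializations; the variables $y_0$ (resp. $y_{N+1}$) are kept as the formal variable $t$ (resp. $s$) and sent to $0$ at the end. *)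

theory Defs
  imports Complex_Main
begin

text \<open>Ladder graph of m tiles: vertex (True,k) is u_k, (False,k) is v_k, 0 <= k <= m.\<close>

definition ladder_V :: "nat \<Rightarrow> (bool \<times> nat) set" where
  "ladder_V m = {(b, k). k \<le> m}"

definition ladder_E :: "nat \<Rightarrow> (bool \<times> nat) set set" where
  "ladder_E m =
     {{(True, k - 1), (True, k)} | k. 1 \<le> k \<and> k \<le> m}
   \<union> {{(False, k - 1), (False, k)} | k. 1 \<le> k \<and> k \<le> m}
   \<union> {{(True, k), (False, k)} | k. k \<le> m}"

text \<open>Edge weights of the ladder of tiles T_a,...,T_(a+m-1): u_(k-1)u_k has weight y_(a+k),
  v_(k-1)v_k has weight y_(a+k-2), u_k v_k has weight 1. (The edges are pairwise distinct,
  so exactly one summand is non-zero for an edge.)\<close>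
definition ladder_wt :: "(int \<Rightarrow> real) \<Rightarrow> int \<Rightarrow> nat \<Rightarrow> (bool \<times> nat) set \<Rightarrow> real" where
  "ladder_wt y a m e =
     (\<Sum>k\<in>{1..m}. if e = {(True, k - 1), (True, k)} then y (a + int k) else 0)
   + (\<Sum>k\<in>{1..m}. if e = {(False, k - 1), (False, k)} then y (a + int k - 2) else 0)
   + (\<Sum>k\<in>{0..m}. if e = {(True, k), (False, k)} then 1 else 0)"

definition perfect_matchings :: "nat \<Rightarrow> (bool \<times> nat) set set set" where
  "perfect_matchings m =
     {M. M \<subseteq> ladder_E m \<and> (\<forall>v\<in>ladder_V m. \<exists>!e. e \<in> M \<and> v \<in> e)}"

definition P_ladder :: "(int \<Rightarrow> real) \<Rightarrow> int \<Rightarrow> int \<Rightarrow> real" where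
  "P_ladder y a b = (let m = nat (b - a + 1) in
     \<Sum>M\<in>perfect_matchings m. \<Prod>e\<in>M. ladder_wt y a m e)"

definition Q_ladder :: "(int \<Rightarrow> real) \<Rightarrow> int \<Rightarrow> int \<Rightarrow> real" where
  "Q_ladder y a b = P_ladder y a b / (\<Prod>i\<in>{a..b}. y i)"

definition spec1 :: "(nat \<Rightarrow> real) \<Rightarrow> real \<Rightarrow> int \<Rightarrow> real" where
  "spec1 f t i =
     (if i = 0 then t
      else if i = 1 then 1
      else if i \<ge> 2 then f (nat i)
      else if i = -1 then -1
      else - f (nat (- i)))"

definition spec2 :: "int \<Rightarrow> (int \<Rightarrow> real) \<Rightarrow> real \<Rightarrow> int \<Rightarrow> real" where
  "spec2 N g s i =
     (if i \<le> N - 1 then g i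
      else if i = N then 1
      else if i = N + 1 then s
      else if i = N + 2 then -1
      else - g (2 * N + 2 - i))"

end

theory Submission
  imports Defs
begin


fun K :: "real list \<Rightarrow> real" where
  "K [] = 1"
| "K [x] = 1 + x"
| "K (x # y # zs) = K (y # zs) + x * K zs"

lemma K_cons: "K (x # xs) = K xs + x * K (tl xs)"
  by (cases xs) auto

lemma K_split: "K (xs @ p # ys) = K xs * K ys + p * K (butlast xs) * K (tl ys)"
proof (induction xs rule: K.induct)
  case 1
  then show ?case by (simp add: K_cons)
next
  case (2 x)
  then show ?case by (simp add: K_cons algebra_simps)
next
  case (3 x y zs)
  then show ?case by (simp add: algebra_simps)
qed

lemma K_snoc: "K (ws @ [z]) = K ws + z * K (butlast ws)"
  using K_split[of ws z "[]"] by simp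

lemma K_rev: "K (rev xs) = K xs"
proof (induction xs rule: length_induct)
  case (1 xs)
  show ?case
  proof (cases xs)
    case Nil then show ?thesis by simp
  next
    case (Cons x ys)
    have "K (rev xs) = K (rev ys) + x * K (butlast (rev ys))"
      using Cons by (simp add: K_snoc)
    also have "butlast (rev ys) = rev (tl ys)" by (simp add: butlast_rev)
    also have "K (rev ys) = K ys" using 1 Cons by simp
    also have "K (rev (tl ys)) = K (tl ys)" using 1 Cons by (cases ys) auto
    finally show ?thesis using Cons by (simp add: K_cons)
  qed
qed

lemma K_ident: "K ws * K (tl (ws @ [z])) - K (tl ws) * K (ws @ [z]) = (-1) ^ (length ws + 1) * z * prod_list ws"
proof (induction ws)
  case Nil then show ?case by simp
next
  case (Cons x ws)
  have "K (x # ws) * K (tl ((x # ws) @ [z])) - K (tl (x # ws)) * K ((x # ws) @ [z])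
      = (K ws + x * K (tl ws)) * K (ws @ [z]) - K ws * (K (ws @ [z]) + x * K (tl (ws @ [z])))"
    by (simp add: K_cons)
  also have "\<dots> = - x * (K ws * K (tl (ws @ [z])) - K (tl ws) * K (ws @ [z]))"
    by (simp add: algebra_simps)
  finally show ?case using Cons by simp
qed


definition rE :: "nat \<Rightarrow> (bool \<times> nat) set" where "rE k = {(True, k), (False, k)}"
definition tE :: "nat \<Rightarrow> (bool \<times> nat) set" where "tE k = {(True, k - 1), (True, k)}"
definition bE :: "nat \<Rightarrow> (bool \<times> nat) set" where "bE k = {(False, k - 1), (False, k)}"
lemma mem_rE[simp]: "(b, i) \<in> rE k \<longleftrightarrow> i = k" by (cases b) (auto simp: rE_def)
lemma mem_tE[simp]: "(b, i) \<in> tE k \<longleftrightarrow> b \<and> (i = k - 1 \<or> i = k)" by (auto simp: tE_def)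
lemma mem_bE[simp]: "(b, i) \<in> bE k \<longleftrightarrow> \<not> b \<and> (i = k - 1 \<or> i = k)" by (auto simp: bE_def)
lemma rE_ne_tE[simp]: "rE k \<noteq> tE j" "tE j \<noteq> rE k"
  by (metis mem_rE mem_tE)+
lemma rE_ne_bE[simp]: "rE k \<noteq> bE j" "bE j \<noteq> rE k"
  by (metis mem_rE mem_bE)+
lemma tE_ne_bE[simp]: "tE k \<noteq> bE j" "bE j \<noteq> tE k"
  by (metis mem_tE mem_bE)+
lemma rE_eq[simp]: "rE k = rE j \<longleftrightarrow> k = j"
  by (metis mem_rE)
lemma tE_eq[simp]: "1 \<le> k \<Longrightarrow> 1 \<le> j \<Longrightarrow> tE k = tE j \<longleftrightarrow> k = j"
proof
  assume "1 \<le> k" "1 \<le> j" "tE k = tE j"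
  then have "(True, k) \<in> tE j" "(True, j) \<in> tE k" by (auto simp: tE_def)
  then show "k = j" using \<open>1 \<le> k\<close> \<open>1 \<le> j\<close> by auto
qed simp
lemma bE_eq[simp]: "1 \<le> k \<Longrightarrow> 1 \<le> j \<Longrightarrow> bE k = bE j \<longleftrightarrow> k = j"
proof
  assume "1 \<le> k" "1 \<le> j" "bE k = bE j"
  then have "(False, k) \<in> bE j" "(False, j) \<in> bE k" by (auto simp: bE_def)
  then show "k = j" using \<open>1 \<le> k\<close> \<open>1 \<le> j\<close> by auto
qed simp


lemma E_iff: "e \<in> ladder_E m \<longleftrightarrow>
   (\<exists>k. 1 \<le> k \<and> k \<le> m \<and> e = tE k) \<or> (\<exists>k. 1 \<le> k \<and> k \<le> m \<and> e = bE k) \<or> (\<exists>k\<le>m. e = rE k)"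
  unfolding ladder_E_def tE_def bE_def rE_def by blast

lemma V_iff[simp]: "v \<in> ladder_V m \<longleftrightarrow> snd v \<le> m"
  by (cases v) (auto simp: ladder_V_def)

lemma E_vert: "e \<in> ladder_E m \<Longrightarrow> (b, i) \<in> e \<Longrightarrow> i \<le> m"
  unfolding E_iff by auto


lemma E_eq: "ladder_E m = tE ` {1..m} \<union> bE ` {1..m} \<union> rE ` {0..m}"
  by (rule set_eqI) (auto simp: E_iff)

lemma E_mono: "e \<in> ladder_E n \<Longrightarrow> n \<le> m \<Longrightarrow> e \<in> ladder_E m"
  unfolding E_eq by auto

lemma finite_E: "finite (ladder_E m)"
  unfolding E_eq by simp

lemma PM_sub: "M \<in> perfect_matchings m \<Longrightarrow> M \<subseteq> ladder_E m"
  by (simp add: perfect_matchings_def)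
lemma PM_cover: "M \<in> perfect_matchings m \<Longrightarrow> i \<le> m \<Longrightarrow> \<exists>e\<in>M. (b, i) \<in> e"
proof -
  assume a: "M \<in> perfect_matchings m" "i \<le> m"
  have "(b, i) \<in> ladder_V m" using a by simp
  then have "\<exists>!e. e \<in> M \<and> (b, i) \<in> e" using a unfolding perfect_matchings_def by blast
  then show ?thesis by blast
qed
lemma PM_uniq: "M \<in> perfect_matchings m \<Longrightarrow> i \<le> m \<Longrightarrow> e1 \<in> M \<Longrightarrow> e2 \<in> M \<Longrightarrow> (b, i) \<in> e1 \<Longrightarrow> (b, i) \<in> e2 \<Longrightarrow> e1 = e2"
proof -
  assume a: "M \<in> perfect_matchings m" "i \<le> m" "e1 \<in> M" "e2 \<in> M" "(b, i) \<in> e1" "(b, i) \<in> e2"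
  have "(b, i) \<in> ladder_V m" using a by simp
  then have "\<exists>!e. e \<in> M \<and> (b, i) \<in> e" using a unfolding perfect_matchings_def by blast
  then show ?thesis using a by blast
qed
lemma PM_intro:
  assumes "M \<subseteq> ladder_E m"
    and "\<And>b i. i \<le> m \<Longrightarrow> \<exists>e\<in>M. (b, i) \<in> e"
    and "\<And>b i e1 e2. i \<le> m \<Longrightarrow> e1 \<in> M \<Longrightarrow> e2 \<in> M \<Longrightarrow> (b, i) \<in> e1 \<Longrightarrow> (b, i) \<in> e2 \<Longrightarrow> e1 = e2"
  shows "M \<in> perfect_matchings m"
  unfolding perfect_matchings_def
proof (intro CollectI conjI ballI)
  show "M \<subseteq> ladder_E m" by fact
  fix v assume "v \<in> ladder_V m"
  then obtain b i where v: "v = (b, i)" "i \<le> m" by (cases v) auto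
  show "\<exists>!e. e \<in> M \<and> v \<in> e" using assms(2)[OF v(2)] assms(3)[OF v(2)] unfolding v(1) by blast
qed

lemma finite_PM: "finite (perfect_matchings m)"
proof -
  have "perfect_matchings m \<subseteq> Pow (ladder_E m)" by (auto dest: PM_sub)
  then show ?thesis using finite_E by (meson finite_Pow_iff finite_subset)
qed

lemma finite_M: "M \<in> perfect_matchings m \<Longrightarrow> finite M"
  using PM_sub finite_E finite_subset by blast


lemma E_restrict:
  assumes a: "e \<in> ladder_E m" and h: "\<And>b i. (b, i) \<in> e \<Longrightarrow> i \<le> n"
  shows "e \<in> ladder_E n"
proof -
  from a consider k where "e = tE k" "1 \<le> k" | k where "e = bE k" "1 \<le> k" | k where "e = rE k"
    unfolding E_eq by auto
  then show ?thesis
  proof cases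
    case (1 k) then have "k \<le> n" using h[of True k] by auto
    then show ?thesis using 1 by (auto simp: E_eq)
  next
    case (2 k) then have "k \<le> n" using h[of False k] by auto
    then show ?thesis using 2 by (auto simp: E_eq)
  next
    case (3 k) then have "k \<le> n" using h[of True k] by auto
    then show ?thesis using 3 by (auto simp: E_eq)
  qed
qed

lemma E_ne: "e \<in> ladder_E m \<Longrightarrow> \<exists>b i. (b, i) \<in> e"
  unfolding E_eq by auto

lemma E_True: "e \<in> ladder_E (Suc n) \<Longrightarrow> (True, Suc n) \<in> e \<Longrightarrow> e = rE (Suc n) \<or> e = tE (Suc n)"
  unfolding E_eq by auto
lemma E_False: "e \<in> ladder_E (Suc n) \<Longrightarrow> (False, Suc n) \<in> e \<Longrightarrow> e = rE (Suc n) \<or> e = bE (Suc n)"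
  unfolding E_eq by auto

lemma L1:
  assumes M: "M \<in> perfect_matchings (Suc n)" and r: "rE (Suc n) \<in> M"
  shows "M - {rE (Suc n)} \<in> perfect_matchings n"
proof (rule PM_intro)
  show "M - {rE (Suc n)} \<subseteq> ladder_E n"
  proof
    fix e assume e: "e \<in> M - {rE (Suc n)}"
    have eE: "e \<in> ladder_E (Suc n)" using e PM_sub[OF M] by auto
    show "e \<in> ladder_E n"
    proof (rule E_restrict[OF eE])
      fix b i assume bi: "(b, i) \<in> e"
      have "i \<le> Suc n" using E_vert[OF eE bi] .
      moreover have "i \<noteq> Suc n"
      proof
        assume "i = Suc n"
        then have "e = rE (Suc n)" using PM_uniq[OF M _ _ r bi] e bi by auto
        then show False using e by auto
      qed
      ultimately show "i \<le> n" by simp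
    qed
  qed
next
  fix b i assume i: "i \<le> n"
  then obtain e where "e \<in> M" "(b, i) \<in> e" using PM_cover[OF M, of i b] by auto
  then show "\<exists>e\<in>M - {rE (Suc n)}. (b, i) \<in> e" using i by auto
next
  fix b i e1 e2 assume "i \<le> n" "e1 \<in> M - {rE (Suc n)}" "e2 \<in> M - {rE (Suc n)}" "(b, i) \<in> e1" "(b, i) \<in> e2"
  then show "e1 = e2" using PM_uniq[OF M, of i e1 e2 b] by auto
qed

lemma L2:
  assumes M: "M \<in> perfect_matchings (Suc n)" and r: "rE (Suc n) \<notin> M"
  shows "tE (Suc n) \<in> M \<and> bE (Suc n) \<in> M"
proof
  obtain e where e: "e \<in> M" "(True, Suc n) \<in> e" using PM_cover[OF M, of "Suc n" True] by auto
  then show "tE (Suc n) \<in> M" using E_True[of e n] PM_sub[OF M] r by auto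
next
  obtain e where e: "e \<in> M" "(False, Suc n) \<in> e" using PM_cover[OF M, of "Suc n" False] by auto
  then show "bE (Suc n) \<in> M" using E_False[of e n] PM_sub[OF M] r by auto
qed

lemma L3:
  assumes M: "M \<in> perfect_matchings (Suc (Suc n))" and t: "tE (Suc (Suc n)) \<in> M" and b: "bE (Suc (Suc n)) \<in> M"
  shows "M - {tE (Suc (Suc n)), bE (Suc (Suc n))} \<in> perfect_matchings n"
proof (rule PM_intro)
  show "M - {tE (Suc (Suc n)), bE (Suc (Suc n))} \<subseteq> ladder_E n"
  proof
    fix e assume e: "e \<in> M - {tE (Suc (Suc n)), bE (Suc (Suc n))}"
    have eE: "e \<in> ladder_E (Suc (Suc n))" using e PM_sub[OF M] by auto
    show "e \<in> ladder_E n"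
    proof (rule E_restrict[OF eE])
      fix bb i assume bi: "(bb, i) \<in> e"
      have "i \<le> Suc (Suc n)" using E_vert[OF eE bi] .
      moreover have "i \<noteq> Suc n \<and> i \<noteq> Suc (Suc n)"
      proof (cases bb)
        case True
        show ?thesis
        proof (rule ccontr)
          assume nt: "\<not> ?thesis"
          then have "(bb, i) \<in> tE (Suc (Suc n))" using True by auto
          then have "e = tE (Suc (Suc n))" using PM_uniq[OF M _ _ t bi] e bi nt by auto
          then show False using e by auto
        qed
      next
        case False
        show ?thesis
        proof (rule ccontr)
          assume nt: "\<not> ?thesis"
          then have "(bb, i) \<in> bE (Suc (Suc n))" using False by auto
          then have "e = bE (Suc (Suc n))" using PM_uniq[OF M _ _ b bi] e bi nt by auto
          then show False using e by auto
        qed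
      qed
      ultimately show "i \<le> n" by linarith
    qed
  qed
next
  fix bb i assume i: "i \<le> n"
  then obtain e where "e \<in> M" "(bb, i) \<in> e" using PM_cover[OF M, of i bb] by auto
  then show "\<exists>e\<in>M - {tE (Suc (Suc n)), bE (Suc (Suc n))}. (bb, i) \<in> e" using i by auto
next
  fix bb i e1 e2 assume "i \<le> n" "e1 \<in> M - {tE (Suc (Suc n)), bE (Suc (Suc n))}" "e2 \<in> M - {tE (Suc (Suc n)), bE (Suc (Suc n))}" "(bb, i) \<in> e1" "(bb, i) \<in> e2"
  then show "e1 = e2" using PM_uniq[OF M, of i e1 e2 bb] by auto
qed

lemma L3':
  assumes M: "M \<in> perfect_matchings 1" and t: "tE 1 \<in> M" and b: "bE 1 \<in> M"
  shows "M = {tE 1, bE 1}"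
proof -
  have "e \<in> {tE 1, bE 1}" if e: "e \<in> M" for e
  proof -
    have eE: "e \<in> ladder_E 1" using e PM_sub[OF M] by auto
    obtain bb i where bi: "(bb, i) \<in> e" using E_ne[OF eE] by auto
    have i: "i \<le> 1" using E_vert[OF eE bi] .
    show ?thesis
    proof (cases bb)
      case True
      then have "(bb, i) \<in> tE 1" using i by auto
      then show ?thesis using PM_uniq[OF M i e t bi] by auto
    next
      case False
      then have "(bb, i) \<in> bE 1" using i by auto
      then show ?thesis using PM_uniq[OF M i e b bi] by auto
    qed
  qed
  then show ?thesis using t b by auto
qed

lemma C1:
  assumes M: "M \<in> perfect_matchings n"
  shows "insert (rE (Suc n)) M \<in> perfect_matchings (Suc n)"
proof (rule PM_intro)
  show "insert (rE (Suc n)) M \<subseteq> ladder_E (Suc n)"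
    using PM_sub[OF M] E_mono[of _ n "Suc n"] by (auto simp: E_eq)
next
  fix bb i assume i: "i \<le> Suc n"
  show "\<exists>e\<in>insert (rE (Suc n)) M. (bb, i) \<in> e"
  proof (cases "i = Suc n")
    case True then show ?thesis by auto
  next
    case False then show ?thesis using PM_cover[OF M, of i bb] i by auto
  qed
next
  fix bb i e1 e2 assume a: "i \<le> Suc n" "e1 \<in> insert (rE (Suc n)) M" "e2 \<in> insert (rE (Suc n)) M" "(bb, i) \<in> e1" "(bb, i) \<in> e2"
  have v: "e \<in> M \<Longrightarrow> (bb, i) \<in> e \<Longrightarrow> i \<le> n" for e using PM_sub[OF M] E_vert by blast
  show "e1 = e2"
  proof (cases "e1 \<in> M \<and> e2 \<in> M")
    case True then show ?thesis using PM_uniq[OF M _ _ _ a(4,5)] v a by blast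
  next
    case False then show ?thesis using a v by fastforce
  qed
qed

lemma C2:
  assumes M: "M \<in> perfect_matchings n"
  shows "M \<union> {tE (Suc (Suc n)), bE (Suc (Suc n))} \<in> perfect_matchings (Suc (Suc n))"
proof (rule PM_intro)
  show "M \<union> {tE (Suc (Suc n)), bE (Suc (Suc n))} \<subseteq> ladder_E (Suc (Suc n))"
    using PM_sub[OF M] E_mono[of _ n "Suc (Suc n)"] by (auto simp: E_eq)
next
  fix bb i assume i: "i \<le> Suc (Suc n)"
  show "\<exists>e\<in>M \<union> {tE (Suc (Suc n)), bE (Suc (Suc n))}. (bb, i) \<in> e"
  proof (cases "i \<le> n")
    case True then show ?thesis using PM_cover[OF M, of i bb] i by auto
  next
    case False then show ?thesis using i by (cases bb) auto
  qed
next
  fix bb i e1 e2 assume a: "i \<le> Suc (Suc n)" "e1 \<in> M \<union> {tE (Suc (Suc n)), bE (Suc (Suc n))}" "e2 \<in> M \<union> {tE (Suc (Suc n)), bE (Suc (Suc n))}" "(bb, i) \<in> e1" "(bb, i) \<in> e2"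
  have v: "e \<in> M \<Longrightarrow> (bb, i) \<in> e \<Longrightarrow> i \<le> n" for e using PM_sub[OF M] E_vert by blast
  show "e1 = e2"
  proof (cases "e1 \<in> M \<and> e2 \<in> M")
    case True then show ?thesis using PM_uniq[OF M _ _ _ a(4,5)] v a by blast
  next
    case False then show ?thesis using a v by (cases bb) fastforce+
  qed
qed

lemma C2': "{tE 1, bE 1} \<in> perfect_matchings 1"
proof (rule PM_intro)
  show "{tE 1, bE 1} \<subseteq> ladder_E 1" by (auto simp: E_eq)
next
  fix bb and i :: nat assume "i \<le> 1" then show "\<exists>e\<in>{tE 1, bE 1}. (bb, i) \<in> e" by (cases bb) auto
next
  fix bb i e1 e2 assume "e1 \<in> {tE 1, bE 1}" "e2 \<in> {tE 1, bE 1}" "(bb, i) \<in> e1" "(bb, i) \<in> e2"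
  then show "e1 = e2" by auto
qed



lemma PM_SS: "perfect_matchings (Suc (Suc n)) =
   insert (rE (Suc (Suc n))) ` perfect_matchings (Suc n) \<union> (\<lambda>M. M \<union> {tE (Suc (Suc n)), bE (Suc (Suc n))}) ` perfect_matchings n"
  (is "?L = ?A \<union> ?B")
proof
  show "?L \<subseteq> ?A \<union> ?B"
  proof
    fix M assume M: "M \<in> ?L"
    show "M \<in> ?A \<union> ?B"
    proof (cases "rE (Suc (Suc n)) \<in> M")
      case True
      then have "M = insert (rE (Suc (Suc n))) (M - {rE (Suc (Suc n))})" by auto
      then show ?thesis using L1[OF M True] by blast
    next
      case False
      then have tb: "tE (Suc (Suc n)) \<in> M" "bE (Suc (Suc n)) \<in> M" using L2[OF M] by auto
      then have "M = (M - {tE (Suc (Suc n)), bE (Suc (Suc n))}) \<union> {tE (Suc (Suc n)), bE (Suc (Suc n))}" by auto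
      then show ?thesis using L3[OF M tb] by blast
    qed
  qed
next
  have "?A \<subseteq> ?L" using C1 by blast
  moreover have "?B \<subseteq> ?L" using C2 by blast
  ultimately show "?A \<union> ?B \<subseteq> ?L" by (rule Un_least)
qed

lemma PM_1: "perfect_matchings 1 = insert (rE 1) ` perfect_matchings 0 \<union> {{tE 1, bE 1}}"
  (is "?L = ?A \<union> ?B")
proof
  show "?L \<subseteq> ?A \<union> ?B"
  proof
    fix M assume M: "M \<in> ?L"
    then have M': "M \<in> perfect_matchings (Suc 0)" by simp
    show "M \<in> ?A \<union> ?B"
    proof (cases "rE 1 \<in> M")
      case True
      then have eq: "M = insert (rE 1) (M - {rE 1})" by blast
      have "M - {rE (Suc 0)} \<in> perfect_matchings 0" using L1[OF M'] True by simp
      then have "M \<in> ?A" using eq by (metis One_nat_def image_eqI)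
      then show ?thesis by (rule UnI1)
    next
      case False
      then have "tE (Suc 0) \<in> M \<and> bE (Suc 0) \<in> M" using L2[OF M'] by simp
      then have "M = {tE 1, bE 1}" using L3'[OF M] by simp
      then show ?thesis by simp
    qed
  qed
next
  have "insert (rE (Suc 0)) M \<in> perfect_matchings (Suc 0)" if "M \<in> perfect_matchings 0" for M
    using C1[OF that] .
  then have "?A \<subseteq> ?L" by auto
  moreover have "?B \<subseteq> ?L" using C2' by simp
  ultimately show "?A \<union> ?B \<subseteq> ?L" by (rule Un_least)
qed

lemma PM_0: "perfect_matchings 0 = {{rE 0}}"
proof
  show "perfect_matchings 0 \<subseteq> {{rE 0}}"
  proof
    fix M assume M: "M \<in> perfect_matchings 0"
    have "M \<subseteq> {rE 0}" using PM_sub[OF M] by (simp add: E_eq)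
    moreover have "M \<noteq> {}" using PM_cover[OF M, of 0 True] by auto
    ultimately show "M \<in> {{rE 0}}" by auto
  qed
next
  have "{rE 0} \<in> perfect_matchings 0"
    by (rule PM_intro) (auto simp: E_eq)
  then show "{{rE 0}} \<subseteq> perfect_matchings 0" by auto
qed

lemma wt_alt: "ladder_wt y a m e =
     (\<Sum>k\<in>{1..m}. if e = tE k then y (a + int k) else 0)
   + (\<Sum>k\<in>{1..m}. if e = bE k then y (a + int k - 2) else 0)
   + (\<Sum>k\<in>{0..m}. if e = rE k then 1 else 0)"
  by (simp add: ladder_wt_def tE_def bE_def rE_def)

lemma wt_t: "1 \<le> k \<Longrightarrow> k \<le> m \<Longrightarrow> ladder_wt y a m (tE k) = y (a + int k)"
proof -
  assume k: "1 \<le> k" "k \<le> m"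
  have "(\<Sum>j\<in>{1..m}. if tE k = tE j then y (a + int j) else 0) = (\<Sum>j\<in>{1..m}. if k = j then y (a + int j) else 0)"
    by (rule sum.cong) (use k in auto)
  also have "\<dots> = y (a + int k)" using k by simp
  finally show ?thesis by (simp add: wt_alt)
qed

lemma wt_b: "1 \<le> k \<Longrightarrow> k \<le> m \<Longrightarrow> ladder_wt y a m (bE k) = y (a + int k - 2)"
proof -
  assume k: "1 \<le> k" "k \<le> m"
  have "(\<Sum>j\<in>{1..m}. if bE k = bE j then y (a + int j - 2) else 0) = (\<Sum>j\<in>{1..m}. if k = j then y (a + int j - 2) else 0)"
    by (rule sum.cong) (use k in auto)
  also have "\<dots> = y (a + int k - 2)" using k by simp
  finally show ?thesis by (simp add: wt_alt)
qed

lemma wt_r: "k \<le> m \<Longrightarrow> ladder_wt y a m (rE k) = 1"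
  by (simp add: wt_alt)

lemma wt_mono:
  assumes a: "e \<in> ladder_E n" and nm: "n \<le> m"
  shows "ladder_wt y a m e = ladder_wt y a n e"
proof -
  from a consider k where "e = tE k" "1 \<le> k" "k \<le> n" | k where "e = bE k" "1 \<le> k" "k \<le> n" | k where "e = rE k" "k \<le> n"
    unfolding E_eq by auto
  then show ?thesis
  proof cases
    case (1 k) then show ?thesis using nm by (simp add: wt_t)
  next
    case (2 k) then show ?thesis using nm by (simp add: wt_b)
  next
    case (3 k) then show ?thesis using nm by (simp add: wt_r)
  qed
qed

definition cc :: "(int \<Rightarrow> real) \<Rightarrow> int \<Rightarrow> real" where "cc y i = y (i + 1) * y (i - 1)"

definition LL :: "(int \<Rightarrow> real) \<Rightarrow> int \<Rightarrow> nat \<Rightarrow> real list" where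
  "LL y a m = map (\<lambda>k. cc y (a + int k)) [0..<m]"

definition PS :: "(int \<Rightarrow> real) \<Rightarrow> int \<Rightarrow> nat \<Rightarrow> real" where
  "PS y a m = (\<Sum>M\<in>perfect_matchings m. \<Prod>e\<in>M. ladder_wt y a m e)"

lemma K_snoc2: "K (xs @ [p, q]) = K (xs @ [p]) + q * K xs"
  using K_snoc[of "xs @ [p]" q] by simp

lemma PS_K: "PS y a m = K (LL y a m)"
proof (induction m rule: less_induct)
  case (less m)
  show ?case
  proof (cases m)
    case 0
    then show ?thesis by (simp add: PS_def PM_0 LL_def wt_r)
  next
    case (Suc n)
    show ?thesis
    proof (cases n)
      case 0
      have ne: "{tE (Suc 0), bE (Suc 0)} \<noteq> {rE (Suc 0), rE 0}"
      proof
        assume h: "{tE (Suc 0), bE (Suc 0)} = {rE (Suc 0), rE 0}"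
        have "tE (Suc 0) \<in> {rE (Suc 0), rE 0}" unfolding h[symmetric] by blast
        then show False by simp
      qed
      have d: "insert (rE 1) ` perfect_matchings 0 \<inter> {{tE 1, bE 1}} = {}" using ne by (auto simp: PM_0)
      have "PS y a 1 = (\<Sum>M\<in>insert (rE 1) ` perfect_matchings 0. \<Prod>e\<in>M. ladder_wt y a 1 e) + (\<Prod>e\<in>{tE 1, bE 1}. ladder_wt y a 1 e)"
        unfolding PS_def PM_1 by (subst sum.union_disjoint) (use d in \<open>auto simp: PM_0\<close>)
      also have "\<dots> = 1 + y (a + 1) * y (a - 1)"
        by (simp add: PM_0 wt_r wt_t wt_b)
      finally show ?thesis using Suc 0 by (simp add: LL_def cc_def)
    next
      case (Suc n')
      have mm: "m = Suc (Suc n')" using \<open>m = Suc n\<close> Suc by simp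
      let ?r = "rE (Suc (Suc n'))" and ?t = "tE (Suc (Suc n'))" and ?b = "bE (Suc (Suc n'))"
      let ?w = "ladder_wt y a (Suc (Suc n'))"
      have rn: "?r \<notin> M" if "M \<in> perfect_matchings k" "k \<le> Suc n'" for M k
        using PM_sub[OF that(1)] E_vert[of ?r k True "Suc (Suc n')"] that(2) by auto
      have tn: "?t \<notin> M" "?b \<notin> M" if "M \<in> perfect_matchings n'" for M
        using PM_sub[OF that] E_vert[of ?t n' True "Suc (Suc n')"] E_vert[of ?b n' False "Suc (Suc n')"] by auto
      have d: "insert ?r ` perfect_matchings (Suc n') \<inter> (\<lambda>M. M \<union> {?t, ?b}) ` perfect_matchings n' = {}"
      proof (rule equals0I)
        fix X assume "X \<in> insert ?r ` perfect_matchings (Suc n') \<inter> (\<lambda>M. M \<union> {?t, ?b}) ` perfect_matchings n'"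
        then obtain M1 M2 where X: "X = insert ?r M1" "X = M2 \<union> {?t, ?b}" "M2 \<in> perfect_matchings n'" by blast
        then have "?r \<in> M2 \<union> {?t, ?b}" by blast
        then have "?r \<in> M2" by simp
        then show False using rn[OF X(3)] by simp
      qed
      have inj1: "inj_on (insert ?r) (perfect_matchings (Suc n'))"
      proof (rule inj_onI)
        fix M1 M2 assume h: "M1 \<in> perfect_matchings (Suc n')" "M2 \<in> perfect_matchings (Suc n')" "insert ?r M1 = insert ?r M2"
        have "?r \<notin> M1" "?r \<notin> M2" using rn[OF h(1)] rn[OF h(2)] by simp_all
        then show "M1 = M2" using h(3) by (simp add: insert_ident)
      qed
      have inj2: "inj_on (\<lambda>M. M \<union> {?t, ?b}) (perfect_matchings n')"
      proof (rule inj_onI)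
        fix M1 M2 assume h: "M1 \<in> perfect_matchings n'" "M2 \<in> perfect_matchings n'" "M1 \<union> {?t, ?b} = M2 \<union> {?t, ?b}"
        have e1: "M1 = (M1 \<union> {?t, ?b}) - {?t, ?b}" using tn[OF h(1)] by blast
        have e2: "M2 = (M2 \<union> {?t, ?b}) - {?t, ?b}" using tn[OF h(2)] by blast
        show "M1 = M2" using e1 e2 h(3) by metis
      qed
      have p1: "(\<Prod>e\<in>insert ?r M. ?w e) = (\<Prod>e\<in>M. ladder_wt y a (Suc n') e)" if M: "M \<in> perfect_matchings (Suc n')" for M
      proof -
        have "(\<Prod>e\<in>insert ?r M. ?w e) = ?w ?r * (\<Prod>e\<in>M. ?w e)"
          using finite_M[OF M] rn[OF M] by simp
        also have "(\<Prod>e\<in>M. ?w e) = (\<Prod>e\<in>M. ladder_wt y a (Suc n') e)"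
          by (rule prod.cong[OF refl], rule wt_mono) (use PM_sub[OF M] in auto)
        finally show ?thesis by (simp add: wt_r)
      qed
      have p2: "(\<Prod>e\<in>M \<union> {?t, ?b}. ?w e) = y (a + int n' + 2) * y (a + int n') * (\<Prod>e\<in>M. ladder_wt y a n' e)" if M: "M \<in> perfect_matchings n'" for M
      proof -
        have "M \<union> {?t, ?b} = insert ?t (insert ?b M)" by auto
        then have "(\<Prod>e\<in>M \<union> {?t, ?b}. ?w e) = ?w ?t * ?w ?b * (\<Prod>e\<in>M. ?w e)"
          using finite_M[OF M] tn[OF M] by simp
        also have "(\<Prod>e\<in>M. ?w e) = (\<Prod>e\<in>M. ladder_wt y a n' e)"
          by (rule prod.cong[OF refl], rule wt_mono) (use PM_sub[OF M] in auto)
        finally show ?thesis by (simp add: wt_t wt_b algebra_simps)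
      qed
      have "PS y a m = (\<Sum>M\<in>insert ?r ` perfect_matchings (Suc n'). \<Prod>e\<in>M. ?w e)
                     + (\<Sum>M\<in>(\<lambda>M. M \<union> {?t, ?b}) ` perfect_matchings n'. \<Prod>e\<in>M. ?w e)"
        unfolding PS_def mm PM_SS by (rule sum.union_disjoint) (use d finite_PM in auto)
      also have "\<dots> = (\<Sum>M\<in>perfect_matchings (Suc n'). \<Prod>e\<in>insert ?r M. ?w e)
                     + (\<Sum>M\<in>perfect_matchings n'. \<Prod>e\<in>M \<union> {?t, ?b}. ?w e)"
        by (simp only: sum.reindex[OF inj1] sum.reindex[OF inj2] o_def)
      also have "\<dots> = PS y a (Suc n') + y (a + int n' + 2) * y (a + int n') * PS y a n'"
      proof -
        have "(\<Sum>M\<in>perfect_matchings (Suc n'). \<Prod>e\<in>insert ?r M. ?w e) = PS y a (Suc n')"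
          unfolding PS_def by (rule sum.cong[OF refl]) (rule p1)
        moreover have "(\<Sum>M\<in>perfect_matchings n'. \<Prod>e\<in>M \<union> {?t, ?b}. ?w e) = y (a + int n' + 2) * y (a + int n') * PS y a n'"
          unfolding PS_def sum_distrib_left by (rule sum.cong[OF refl]) (rule p2)
        ultimately show ?thesis by simp
      qed
      also have "\<dots> = K (LL y a (Suc n')) + y (a + int n' + 2) * y (a + int n') * K (LL y a n')"
        using less mm by simp
      also have "\<dots> = K (LL y a m)"
      proof -
        have "LL y a m = LL y a n' @ [cc y (a + int n'), cc y (a + int n' + 1)]"
          "LL y a (Suc n') = LL y a n' @ [cc y (a + int n')]"
          by (simp_all add: LL_def mm ac_simps)
        then show ?thesis by (simp add: K_snoc2 cc_def algebra_simps)
      qed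
      finally show ?thesis .
    qed
  qed
qed

lemma P_ladder_K: "P_ladder y a b = K (LL y a (nat (b - a + 1)))"
  using PS_K by (simp add: P_ladder_def PS_def)



definition PL :: "(int \<Rightarrow> real) \<Rightarrow> int \<Rightarrow> nat \<Rightarrow> real" where
  "PL y a m = prod_list (map (\<lambda>k. y (a + int k)) [0..<m])"

lemma upto_as_map: "[a..b] = map (\<lambda>k. a + int k) [0..<nat (b - a + 1)]"
  by (rule nth_equalityI) auto

lemma prod_interval: "(\<Prod>i\<in>{a..b}. y i) = PL y a (nat (b - a + 1))"
proof -
  have "(\<Prod>i\<in>{a..b}. y i) = prod_list (map y [a..b])"
    using prod.distinct_set_conv_list[of "[a..b]" y] by simp
  also have "\<dots> = PL y a (nat (b - a + 1))"
    unfolding PL_def by (subst upto_as_map) (simp add: o_def)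
  finally show ?thesis .
qed

lemma Q_K: "Q_ladder y a b = K (LL y a (nat (b - a + 1))) / PL y a (nat (b - a + 1))"
  unfolding Q_ladder_def P_ladder_K prod_interval ..

lemma map_upt_add: "map g [0..<m + n] = map g [0..<m] @ map (\<lambda>k. g (m + k)) [0..<n]"
  by (induction n) auto

lemma LL_add: "LL y a (m + n) = LL y a m @ LL y (a + int m) n"
  unfolding LL_def map_upt_add by (simp add: ac_simps)

lemma PL_add: "PL y a (m + n) = PL y a m * PL y (a + int m) n"
  unfolding PL_def map_upt_add by (simp add: ac_simps)

lemma LL_1: "LL y a 1 = [cc y a]" by (simp add: LL_def)
lemma PL_1: "PL y a 1 = y a" by (simp add: PL_def)
lemma LL_S0: "LL y a (Suc 0) = [cc y a]" by (simp add: LL_def)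
lemma PL_S0: "PL y a (Suc 0) = y a" by (simp add: PL_def)

definition VS :: "(int \<Rightarrow> real) \<Rightarrow> nat \<Rightarrow> real list" where
  "VS y n = map (\<lambda>k. cc y (int k + 2)) [0..<n]"

definition PI :: "(int \<Rightarrow> real) \<Rightarrow> nat \<Rightarrow> real" where
  "PI y n = prod_list (map (\<lambda>k. y (int k + 2)) [0..<n])"

lemma cc_sym: assumes sym: "\<forall>i. y (- i) = - y i" shows "cc y (- i) = cc y i"
proof -
  have 1: "y (- i + 1) = - y (i - 1)" using sym[rule_format, of "i - 1"] by simp
  have 2: "y (- i - 1) = - y (i + 1)" using sym[rule_format, of "i + 1"] by simp
  show ?thesis unfolding cc_def using 1 2 by simp
qed

lemma cc_upd: "i \<noteq> 1 \<Longrightarrow> i \<noteq> -1 \<Longrightarrow> cc (y(0 := t)) i = cc y i"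
  unfolding cc_def by auto

lemma LL_neg:
  assumes sym: "\<forall>i. y (- i) = - y i"
  shows "LL (y(0 := t)) (- (int n + 1)) n = rev (VS y n)"
proof (rule nth_equalityI)
  show "length (LL (y(0 := t)) (- (int n + 1)) n) = length (rev (VS y n))" by (simp add: LL_def VS_def)
next
  fix k assume "k < length (LL (y(0 := t)) (- (int n + 1)) n)"
  then have k: "k < n" by (simp add: LL_def)
  have "LL (y(0 := t)) (- (int n + 1)) n ! k = cc (y(0 := t)) (- (int n + 1) + int k)"
    using k by (simp add: LL_def)
  also have "\<dots> = cc y (- (int n + 1) + int k)" using k by (intro cc_upd) auto
  also have "\<dots> = cc y (- (- (int n + 1) + int k))" using cc_sym[OF sym] by metis
  also have "\<dots> = rev (VS y n) ! k" using k by (simp add: VS_def rev_nth of_nat_diff algebra_simps)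
  finally show "LL (y(0 := t)) (- (int n + 1)) n ! k = rev (VS y n) ! k" .
qed

lemma LL_pos: "LL (y(0 := t)) 2 n = VS y n"
  unfolding LL_def VS_def by (rule map_cong) (auto simp: cc_upd ac_simps)

lemma PL_neg:
  assumes sym: "\<forall>i. y (- i) = - y i"
  shows "PL (y(0 := t)) (- (int n + 1)) n = (-1) ^ n * PI y n"
proof (induction n)
  case 0 then show ?case by (simp add: PL_def PI_def)
next
  case (Suc n)
  have e1: "PL (y(0 := t)) (- (int (Suc n) + 1)) (1 + n) = PL (y(0 := t)) (- (int (Suc n) + 1)) 1 * PL (y(0 := t)) (- (int n + 1)) n"
    by (subst PL_add) (simp add: algebra_simps)
  have "y (- (int n + 2)) = - y (int n + 2)" using sym by blast
  then have e2: "PL (y(0 := t)) (- (int (Suc n) + 1)) 1 = - y (int n + 2)"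
    by (simp add: PL_def algebra_simps)
  have e3: "PI y (Suc n) = PI y n * y (int n + 2)" by (simp add: PI_def)
  show ?case using e1 e2 e3 Suc.IH by (simp add: algebra_simps fun_upd_def)
qed

lemma PL_pos: "PL (y(0 := t)) 2 n = PI y n"
  unfolding PL_def PI_def by (rule arg_cong[where f = prod_list], rule map_cong) (auto simp: ac_simps)

lemma prodVS: "y 1 = 1 \<Longrightarrow> y 2 * prod_list (VS y n) * y (int n + 1) = (PI y n)^2 * y (int n + 2)"
proof (induction n)
  case 0 then show ?case by (simp add: VS_def PI_def)
next
  case (Suc n)
  have "y 2 * prod_list (VS y (Suc n)) * y (int (Suc n) + 1) = (y 2 * prod_list (VS y n) * y (int n + 1)) * y (int n + 3) * y (int n + 2)"
    by (simp add: VS_def cc_def algebra_simps)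
  also have "\<dots> = (PI y (Suc n))^2 * y (int (Suc n) + 2)"
    using Suc by (simp add: PI_def power2_eq_square algebra_simps)
  finally show ?case .
qed


lemma Kcore: "K (rev V @ [- z, -1, z] @ WS) = z * (K V * K (tl WS) - K (tl V) * K WS) - z^2 * K (tl V) * K (tl WS)"
proof -
  have "rev V @ [- z, -1, z] @ WS = (rev V @ [- z]) @ (-1) # (z # WS)" by simp
  then have "K (rev V @ [- z, -1, z] @ WS) = K (rev V @ [- z]) * K (z # WS) + (-1) * K (butlast (rev V @ [- z])) * K (tl (z # WS))"
    by (simp only: K_split)
  also have "K (rev V @ [- z]) = K V - z * K (tl V)"
    by (simp add: K_snoc K_rev butlast_rev)
  also have "K (z # WS) = K WS + z * K (tl WS)" by (rule K_cons)
  finally show ?thesis by (simp add: K_rev algebra_simps power2_eq_square)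
qed

lemma PI_nz: "\<forall>i. i \<noteq> 0 \<longrightarrow> y i \<noteq> 0 \<Longrightarrow> PI y n \<noteq> 0"
  unfolding PI_def by (induction n) auto

lemma caseA:
  assumes sym: "\<forall>i. y (- i) = - y i" and y1: "y 1 = 1" and nz: "\<forall>i. i \<noteq> 0 \<longrightarrow> y i \<noteq> 0"
  shows "\<exists>bb. \<forall>t. t \<noteq> 0 \<longrightarrow> Q_ladder (y(0 := t)) (- (int n + 1)) (int n + 2) = y (int n + 3) + bb * t"
proof -
  define V where "V = VS y n"
  define c where "c = cc y (int n + 2)"
  define D0 where "D0 = (-1) ^ (n + 1) * (PI y n)^2 * y (int n + 2)"
  have D0: "D0 \<noteq> 0" unfolding D0_def using PI_nz[OF nz] nz by simp
  have ym2: "y (-2) = - y 2" using sym by (metis)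
  have ym1: "y (-1) = -1" using sym y1 by (metis)
  define bb where "bb = - (y 2 * y 2 * K (tl V) * K (tl (V @ [c]))) / D0"
  have "\<forall>t. t \<noteq> 0 \<longrightarrow> Q_ladder (y(0 := t)) (- (int n + 1)) (int n + 2) = y (int n + 3) + bb * t"
  proof (intro allI impI)
    fix t :: real assume t: "t \<noteq> 0"
    let ?yt = "y(0 := t)"
    have m: "nat (int n + 2 - - (int n + 1) + 1) = n + (1 + (1 + (1 + (n + 1))))" by simp
    have L: "LL ?yt (- (int n + 1)) (n + (1 + (1 + (1 + (n + 1))))) = rev V @ [- (t * y 2), -1, t * y 2] @ V @ [c]"
    proof -
      have "LL ?yt (- (int n + 1)) (n + (1 + (1 + (1 + (n + 1))))) =
         LL ?yt (- (int n + 1)) n @ LL ?yt (-1) 1 @ LL ?yt 0 1 @ LL ?yt 1 1 @ LL ?yt 2 n @ LL ?yt (int n + 2) 1"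
        by (simp only: LL_add) (simp add: algebra_simps)
      also have "\<dots> = rev V @ [- (t * y 2), -1, t * y 2] @ V @ [c]"
        using LL_neg[OF sym, of t n] LL_pos[of y t n] ym2 ym1 y1
        by (simp add: LL_S0 V_def c_def cc_def)
      finally show ?thesis .
    qed
    have P: "PL ?yt (- (int n + 1)) (n + (1 + (1 + (1 + (n + 1))))) = t * D0"
    proof -
      have "PL ?yt (- (int n + 1)) (n + (1 + (1 + (1 + (n + 1))))) =
         PL ?yt (- (int n + 1)) n * (PL ?yt (-1) 1 * (PL ?yt 0 1 * (PL ?yt 1 1 * (PL ?yt 2 n * PL ?yt (int n + 2) 1))))"
        by (simp only: PL_add) (simp add: algebra_simps)
      also have "\<dots> = t * D0"
        using PL_neg[OF sym, of t n] PL_pos[of y t n] ym1 y1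
        by (simp add: PL_S0 D0_def power2_eq_square algebra_simps)
      finally show ?thesis .
    qed
    have id: "K V * K (tl (V @ [c])) - K (tl V) * K (V @ [c]) = (-1) ^ (n + 1) * c * prod_list V"
      using K_ident[of V c] by (simp add: V_def VS_def)
    have pv: "y 2 * prod_list V * y (int n + 1) = (PI y n)^2 * y (int n + 2)"
      using prodVS[of y n] y1 by (simp add: V_def)
    have KK: "K (rev V @ [- (t * y 2), -1, t * y 2] @ V @ [c]) = t * y (int n + 3) * D0 - t^2 * (y 2)^2 * K (tl V) * K (tl (V @ [c]))"
    proof -
      have "K (rev V @ [- (t * y 2), -1, t * y 2] @ V @ [c]) = (t * y 2) * ((-1) ^ (n + 1) * c * prod_list V) - (t * y 2)^2 * K (tl V) * K (tl (V @ [c]))"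
        using Kcore[of V "t * y 2" "V @ [c]"] id by simp
      also have "(t * y 2) * ((-1) ^ (n + 1) * c * prod_list V) = t * y (int n + 3) * D0"
      proof -
        have "c = y (int n + 3) * y (int n + 1)" by (simp add: c_def cc_def algebra_simps)
        then have "(t * y 2) * ((-1) ^ (n + 1) * c * prod_list V) = t * y (int n + 3) * (-1) ^ (n + 1) * (y 2 * prod_list V * y (int n + 1))"
          by (simp add: algebra_simps)
        also have "\<dots> = t * y (int n + 3) * D0" unfolding pv D0_def by (simp add: algebra_simps)
        finally show ?thesis .
      qed
      finally show ?thesis by (simp add: power_mult_distrib)
    qed
    show "Q_ladder ?yt (- (int n + 1)) (int n + 2) = y (int n + 3) + bb * t"
      unfolding Q_K m L P KK bb_def using t D0 by (simp add: field_simps power2_eq_square)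
  qed
  then show ?thesis by blast
qed


lemma caseB:
  assumes sym: "\<forall>i. y (- i) = - y i" and y1: "y 1 = 1" and nz: "\<forall>i. i \<noteq> 0 \<longrightarrow> y i \<noteq> 0"
  shows "\<exists>bb. \<forall>t. t \<noteq> 0 \<longrightarrow> Q_ladder (y(0 := t)) (- (int n + 1)) (int n + 3) = 1 + bb * t"
proof -
  define V where "V = VS y n"
  define c where "c = cc y (int n + 2)"
  define c' where "c' = cc y (int n + 3)"
  define D0 where "D0 = (-1) ^ (n + 1) * (PI y n)^2 * y (int n + 2) * y (int n + 3)"
  have D0: "D0 \<noteq> 0" unfolding D0_def using PI_nz[OF nz] nz by simp
  have ym2: "y (-2) = - y 2" using sym by (metis)
  have ym1: "y (-1) = -1" using sym y1 by (metis)
  define bb where "bb = - (y 2 * y 2 * K (tl V) * K (tl (V @ [c, c']))) / D0"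
  have "\<forall>t. t \<noteq> 0 \<longrightarrow> Q_ladder (y(0 := t)) (- (int n + 1)) (int n + 3) = 1 + bb * t"
  proof (intro allI impI)
    fix t :: real assume t: "t \<noteq> 0"
    let ?yt = "y(0 := t)"
    have m: "nat (int n + 3 - - (int n + 1) + 1) = n + (1 + (1 + (1 + (n + (1 + 1)))))" by simp
    have L: "LL ?yt (- (int n + 1)) (n + (1 + (1 + (1 + (n + (1 + 1)))))) = rev V @ [- (t * y 2), -1, t * y 2] @ V @ [c, c']"
    proof -
      have "LL ?yt (- (int n + 1)) (n + (1 + (1 + (1 + (n + (1 + 1)))))) =
         LL ?yt (- (int n + 1)) n @ LL ?yt (-1) 1 @ LL ?yt 0 1 @ LL ?yt 1 1 @ LL ?yt 2 n @ LL ?yt (int n + 2) 1 @ LL ?yt (int n + 3) 1"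
        by (simp only: LL_add) (simp add: algebra_simps)
      also have "\<dots> = rev V @ [- (t * y 2), -1, t * y 2] @ V @ [c, c']"
        using LL_neg[OF sym, of t n] LL_pos[of y t n] ym2 ym1 y1
        by (simp add: LL_S0 V_def c_def c'_def cc_def)
      finally show ?thesis .
    qed
    have P: "PL ?yt (- (int n + 1)) (n + (1 + (1 + (1 + (n + (1 + 1)))))) = t * D0"
    proof -
      have "PL ?yt (- (int n + 1)) (n + (1 + (1 + (1 + (n + (1 + 1)))))) =
         PL ?yt (- (int n + 1)) n * (PL ?yt (-1) 1 * (PL ?yt 0 1 * (PL ?yt 1 1 * (PL ?yt 2 n * (PL ?yt (int n + 2) 1 * PL ?yt (int n + 3) 1)))))"
        by (simp only: PL_add) (simp add: algebra_simps)
      also have "\<dots> = t * D0"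
        using PL_neg[OF sym, of t n] PL_pos[of y t n] ym1 y1
        by (simp add: PL_S0 D0_def power2_eq_square algebra_simps)
      finally show ?thesis .
    qed
    have id0: "K V * K (tl (V @ [c])) - K (tl V) * K (V @ [c]) = (-1) ^ (n + 1) * c * prod_list V"
      using K_ident[of V c] by (simp add: V_def VS_def)
    have tl2: "tl (V @ [c, c']) = tl (V @ [c]) @ [c']" by (cases V) auto
    have bt: "butlast (tl (V @ [c])) = tl V" by (cases V) auto
    have id: "K V * K (tl (V @ [c, c'])) - K (tl V) * K (V @ [c, c']) = (-1) ^ (n + 1) * c * prod_list V"
    proof -
      have "K (tl (V @ [c, c'])) = K (tl (V @ [c])) + c' * K (tl V)"
        unfolding tl2 K_snoc bt ..
      moreover have "K (V @ [c, c']) = K (V @ [c]) + c' * K V" by (rule K_snoc2)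
      ultimately show ?thesis using id0 by (simp add: algebra_simps)
    qed
    have pv: "y 2 * prod_list V * y (int n + 1) = (PI y n)^2 * y (int n + 2)"
      using prodVS[of y n] y1 by (simp add: V_def)
    have KK: "K (rev V @ [- (t * y 2), -1, t * y 2] @ V @ [c, c']) = t * D0 - t * t * (y 2 * y 2 * K (tl V) * K (tl (V @ [c, c'])))"
    proof -
      have "K (rev V @ [- (t * y 2), -1, t * y 2] @ V @ [c, c']) = (t * y 2) * ((-1) ^ (n + 1) * c * prod_list V) - (t * y 2)^2 * K (tl V) * K (tl (V @ [c, c']))"
        using Kcore[of V "t * y 2" "V @ [c, c']"] id by simp
      also have "(t * y 2) * ((-1) ^ (n + 1) * c * prod_list V) = t * D0"
      proof -
        have "c = y (int n + 3) * y (int n + 1)" by (simp add: c_def cc_def algebra_simps)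
        then have "(t * y 2) * ((-1) ^ (n + 1) * c * prod_list V) = t * y (int n + 3) * (-1) ^ (n + 1) * (y 2 * prod_list V * y (int n + 1))"
          by (simp add: algebra_simps)
        also have "\<dots> = t * D0" unfolding pv D0_def by (simp add: algebra_simps)
        finally show ?thesis .
      qed
      finally show ?thesis by (simp add: power2_eq_square algebra_simps)
    qed
    show "Q_ladder ?yt (- (int n + 1)) (int n + 3) = 1 + bb * t"
      unfolding Q_K m L P KK bb_def using t D0 by (simp add: field_simps)
  qed
  then show ?thesis by blast
qed

lemma small_a:
  assumes sym: "\<forall>i. y (- i) = - y i" and y1: "y 1 = 1"
  shows "t \<noteq> 0 \<Longrightarrow> Q_ladder (y(0 := t)) 0 1 = y 2"
proof -
  assume t: "t \<noteq> 0"
  have ym1: "y (-1) = -1" using sym y1 by (metis)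
  have "LL (y(0 := t)) 0 2 = [-1, y 2 * t]" using ym1 y1 by (simp add: LL_def cc_def numeral_2_eq_2)
  moreover have "PL (y(0 := t)) 0 2 = t" using y1 by (simp add: PL_def numeral_2_eq_2)
  ultimately show ?thesis using t by (simp add: Q_K)
qed

lemma small_b0:
  assumes y1: "y 1 = 1"
  shows "Q_ladder (y(0 := t)) 1 1 = 1 + y 2 * t"
proof -
  have "LL (y(0 := t)) 1 1 = [y 2 * t]" by (simp add: LL_def cc_def)
  moreover have "PL (y(0 := t)) 1 1 = 1" using y1 by (simp add: PL_def)
  ultimately show ?thesis by (simp add: Q_K)
qed

lemma small_b1:
  assumes sym: "\<forall>i. y (- i) = - y i" and y1: "y 1 = 1" and nz: "y 2 \<noteq> 0"
  shows "t \<noteq> 0 \<Longrightarrow> Q_ladder (y(0 := t)) 0 2 = 1"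
proof -
  assume t: "t \<noteq> 0"
  have ym1: "y (-1) = -1" using sym y1 by (metis)
  have "LL (y(0 := t)) 0 3 = [-1, y 2 * t, cc y 2]" using ym1 y1 by (simp add: LL_def cc_def numeral_3_eq_3)
  moreover have "PL (y(0 := t)) 0 3 = t * y 2" using y1 by (simp add: PL_def numeral_3_eq_3)
  ultimately show ?thesis using t nz by (simp add: Q_K)
qed



lemma prod_list_rev': "prod_list (rev xs) = prod_list (xs :: real list)"
  by (induction xs) (auto simp: mult.commute)

lemma Q_refl:
  assumes ab: "a \<le> b"
  shows "Q_ladder (\<lambda>i. y (r - i)) a b = Q_ladder y (r - b) (r - a)"
proof -
  define m where "m = nat (b - a + 1)"
  have m2: "nat (r - a - (r - b) + 1) = m" unfolding m_def by simp
  have bm: "b = a + int m - 1" unfolding m_def using ab by simp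
  have L: "LL (\<lambda>i. y (r - i)) a m = rev (LL y (r - b) m)"
  proof (rule nth_equalityI)
    show "length (LL (\<lambda>i. y (r - i)) a m) = length (rev (LL y (r - b) m))" by (simp add: LL_def)
  next
    fix k assume "k < length (LL (\<lambda>i. y (r - i)) a m)"
    then have k: "k < m" by (simp add: LL_def)
    have "rev (LL y (r - b) m) ! k = cc y (r - b + int (m - Suc k))"
      using k by (simp add: LL_def rev_nth)
    also have "\<dots> = cc y (r - a - int k)"
    proof -
      have "int (m - Suc k) = int m - int k - 1" using k by (simp add: of_nat_diff)
      then have "r - b + int (m - Suc k) = r - a - int k" using bm by linarith
      then show ?thesis by (rule arg_cong)
    qed
    finally show "LL (\<lambda>i. y (r - i)) a m ! k = rev (LL y (r - b) m) ! k"
      using k by (simp add: LL_def cc_def algebra_simps)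
  qed
  have P: "map (\<lambda>k. y (r - (a + int k))) [0..<m] = rev (map (\<lambda>k. y (r - b + int k)) [0..<m])"
  proof (rule nth_equalityI)
    fix k assume "k < length (map (\<lambda>k. y (r - (a + int k))) [0..<m])"
    then have k: "k < m" by simp
    have "int (m - Suc k) = int m - int k - 1" using k by (simp add: of_nat_diff)
    then have e: "r - b + int (m - Suc k) = r - (a + int k)" using bm by linarith
    show "map (\<lambda>k. y (r - (a + int k))) [0..<m] ! k = rev (map (\<lambda>k. y (r - b + int k)) [0..<m]) ! k"
    proof -
      have e2: "r - b + (int m - (1 + int k)) = r - (a + int k)" using bm by linarith
      show ?thesis using k by (simp add: rev_nth e2)
    qed
  qed simp
  have P2: "PL (\<lambda>i. y (r - i)) a m = PL y (r - b) m"
    unfolding PL_def using P prod_list_rev' by (metis)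
  show ?thesis unfolding Q_K m2 m_def[symmetric] L K_rev P2 ..
qed

lemma lim_aff:
  assumes "\<forall>t. t \<noteq> 0 \<longrightarrow> F t = (\<alpha>::real) + \<beta> * t"
  shows "(F \<longlongrightarrow> \<alpha>) (at 0)"
proof -
  have "((\<lambda>t. \<alpha> + \<beta> * t) \<longlongrightarrow> \<alpha> + \<beta> * 0) (at (0::real))"
    by (intro tendsto_intros)
  then have 1: "((\<lambda>t. \<alpha> + \<beta> * t) \<longlongrightarrow> \<alpha>) (at (0::real))" by simp
  have "\<forall>\<^sub>F t in at 0. \<alpha> + \<beta> * t = F t"
    unfolding eventually_at_filter using assms by simp
  then show ?thesis using 1 by (rule Lim_transform_eventually[rotated])
qed

lemma spec1_upd: "spec1 f t = (spec1 f 0)(0 := t)"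
  by (rule ext) (simp add: spec1_def)

lemma spec1_sym: "\<forall>i. spec1 f 0 (- i) = - spec1 f 0 i"
proof
  fix i :: int
  consider "i = 0" | "i = 1" | "i = -1" | "i \<ge> 2" | "i \<le> -2" by linarith
  then show "spec1 f 0 (- i) = - spec1 f 0 i" by cases (simp_all add: spec1_def)
qed

lemma spec1_1: "spec1 f 0 1 = 1" by (simp add: spec1_def)

lemma spec1_nz:
  assumes nz: "\<forall>n\<ge>2. f n \<noteq> 0"
  shows "\<forall>i. i \<noteq> 0 \<longrightarrow> spec1 f 0 i \<noteq> 0"
proof (intro allI impI)
  fix i :: int assume "i \<noteq> 0"
  then consider "i = 1" | "i = -1" | "i \<ge> 2" | "i \<le> -2" by linarith
  then show "spec1 f 0 i \<noteq> 0"
  proof cases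
    case 3
    then have "nat i \<ge> 2" by simp
    then show ?thesis using 3 nz by (simp add: spec1_def)
  next
    case 4
    then have "nat (- i) \<ge> 2" by simp
    then show ?thesis using 4 nz by (simp add: spec1_def)
  qed (simp_all add: spec1_def)
qed

lemma partA:
  assumes nz: "\<forall>n\<ge>2. f n \<noteq> 0"
  shows "((\<lambda>t. Q_ladder (spec1 f t) (- int j) (int j + 1)) \<longlongrightarrow> f (j + 2)) (at 0)"
proof -
  define y0 where "y0 = spec1 f 0"
  have sp: "spec1 f t = y0(0 := t)" for t unfolding y0_def by (rule spec1_upd)
  have sym: "\<forall>i. y0 (- i) = - y0 i" unfolding y0_def by (rule spec1_sym)
  have y1: "y0 1 = 1" unfolding y0_def by (rule spec1_1)
  have ynz: "\<forall>i. i \<noteq> 0 \<longrightarrow> y0 i \<noteq> 0" unfolding y0_def by (rule spec1_nz[OF nz])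
  show ?thesis
  proof (cases j)
    case 0
    have "y0 2 = f 2" by (simp add: y0_def spec1_def)
    then show ?thesis using 0 small_a[of y0, OF sym y1]
      by (intro lim_aff[where \<beta> = 0]) (simp add: sp numeral_2_eq_2)
  next
    case (Suc n)
    obtain bb where bb: "\<forall>t. t \<noteq> 0 \<longrightarrow> Q_ladder (y0(0 := t)) (- (int n + 1)) (int n + 2) = y0 (int n + 3) + bb * t"
      using caseA[OF sym y1 ynz, of n] by blast
    have "nat (int n + 3) = j + 2" using Suc by simp
    then have e0: "y0 (int n + 3) = f (j + 2)" by (simp add: y0_def spec1_def)
    have e: "- int j = - (int n + 1)" "int j + 1 = int n + 2" using Suc by simp_all
    show ?thesis unfolding e sp e0[symmetric] using bb by (rule lim_aff)
  qed
qed

lemma partB: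
  assumes nz: "\<forall>n\<ge>2. f n \<noteq> 0"
  shows "((\<lambda>t. Q_ladder (spec1 f t) (1 - int k) (1 + int k)) \<longlongrightarrow> 1) (at 0)"
proof -
  define y0 where "y0 = spec1 f 0"
  have sp: "spec1 f t = y0(0 := t)" for t unfolding y0_def by (rule spec1_upd)
  have sym: "\<forall>i. y0 (- i) = - y0 i" unfolding y0_def by (rule spec1_sym)
  have y1: "y0 1 = 1" unfolding y0_def by (rule spec1_1)
  have ynz: "\<forall>i. i \<noteq> 0 \<longrightarrow> y0 i \<noteq> 0" unfolding y0_def by (rule spec1_nz[OF nz])
  have f2: "y0 2 \<noteq> 0" using ynz by simp
  consider "k = 0" | "k = 1" | n where "k = n + 2"
    by (metis add_2_eq_Suc' not0_implies_Suc One_nat_def)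
  then show ?thesis
  proof cases
    case 1
    then show ?thesis using small_b0[of y0, OF y1]
      by (intro lim_aff[where \<beta> = "y0 2"]) (simp add: sp)
  next
    case 2
    then show ?thesis using small_b1[of y0, OF sym y1 f2]
      by (intro lim_aff[where \<beta> = 0]) (simp add: sp)
  next
    case 3
    obtain bb where bb: "\<forall>t. t \<noteq> 0 \<longrightarrow> Q_ladder (y0(0 := t)) (- (int n + 1)) (int n + 3) = 1 + bb * t"
      using caseB[OF sym y1 ynz, of n] by blast
    have e: "1 - int k = - (int n + 1)" "1 + int k = int n + 3" using 3 by simp_all
    show ?thesis unfolding e sp using bb by (rule lim_aff)
  qed
qed

lemma spec2_refl: "spec2 N g s = (\<lambda>i. spec1 (\<lambda>n. g (N + 1 - int n)) s (N + 1 - i))"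
proof
  fix i :: int
  consider "i \<le> N - 1" | "i = N" | "i = N + 1" | "i = N + 2" | "i \<ge> N + 3" by linarith
  then show "spec2 N g s i = spec1 (\<lambda>n. g (N + 1 - int n)) s (N + 1 - i)"
  proof cases
    case 1
    then have "int (nat (N + 1 - i)) = N + 1 - i" by simp
    then show ?thesis using 1 by (simp add: spec1_def spec2_def)
  next
    case 5
    then have "int (nat (- (N + 1 - i))) = i - N - 1" by simp
    moreover have "N + 1 - (i - N - 1) = 2 * N + 2 - i" by simp
    moreover have "2 * N + (2 - i) = 2 * N + 2 - i" by simp
    ultimately show ?thesis using 5 by (simp add: spec1_def spec2_def add_diff_eq)
  qed (simp_all add: spec1_def spec2_def)
qed

theorem lemma3:
  fixes f :: "nat \<Rightarrow> real" and g :: "int \<Rightarrow> real" and N :: int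
  assumes "\<forall>n\<ge>2. f n \<noteq> 0"
    and "\<forall>k\<le>N - 1. g k \<noteq> 0"
  shows "(\<forall>j::nat. ((\<lambda>t. Q_ladder (spec1 f t) (- int j) (int j + 1)) \<longlongrightarrow> f (j + 2)) (at 0))
       \<and> (\<forall>k::nat. ((\<lambda>t. Q_ladder (spec1 f t) (1 - int k) (1 + int k)) \<longlongrightarrow> 1) (at 0))
       \<and> (\<forall>k::nat. ((\<lambda>s. Q_ladder (spec2 N g s) (N - int k) (N + int k)) \<longlongrightarrow> 1) (at 0))"
proof (intro conjI allI)
  fix j show "((\<lambda>t. Q_ladder (spec1 f t) (- int j) (int j + 1)) \<longlongrightarrow> f (j + 2)) (at 0)"
    using partA[OF assms(1)] .
next
  fix k show "((\<lambda>t. Q_ladder (spec1 f t) (1 - int k) (1 + int k)) \<longlongrightarrow> 1) (at 0)"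
    using partB[OF assms(1)] .
next
  fix k :: nat
  define g' where "g' = (\<lambda>n::nat. g (N + 1 - int n))"
  have nz: "\<forall>n\<ge>2. g' n \<noteq> 0" unfolding g'_def using assms(2) by auto
  have "Q_ladder (spec2 N g s) (N - int k) (N + int k) = Q_ladder (spec1 g' s) (1 - int k) (1 + int k)" for s
  proof -
    have "Q_ladder (spec2 N g s) (N - int k) (N + int k) = Q_ladder (\<lambda>i. spec1 g' s (N + 1 - i)) (N - int k) (N + int k)"
      unfolding spec2_refl g'_def ..
    also have "\<dots> = Q_ladder (spec1 g' s) (N + 1 - (N + int k)) (N + 1 - (N - int k))"
      by (rule Q_refl) simp
    also have "N + 1 - (N + int k) = 1 - int k" by simp
    also have "N + 1 - (N - int k) = 1 + int k" by simp
    finally show ?thesis .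
  qed
  then show "((\<lambda>s. Q_ladder (spec2 N g s) (N - int k) (N + int k)) \<longlongrightarrow> 1) (at 0)"
    using partB[OF nz, of k] by simp
qed


end
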